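(* Fix $k\in\mathbb N$ and $a_1,\dots,a_k>0$. Then, as $N\to\infty$, $$N^{2/k}\Big[\min_{j=1}^N\Big(\sum_{i=1}^k a_iw_{ij}^2\Big)-\min_{j=1}^N\Big(\sum_{i=1}^k a_iy_{ij}^2\Big)\Big]\to0\quad\text{in probability}.$$
   Context: Let $\mathbf{y}_1,\dots,\mathbf{y}_N$ be i.i.d. $\mathcal N(0,\mathrm{Id}_N)$ vectors in $\mathbb R^N$, $y_{ij}$ the $j$-th entry of $\mathbf y_i$. Gram–Schmidt: $\mathbf w_1=\mathbf y_1$, $\mathbf w_i=\mathbf y_i-\sum_{j<i}\frac{\langle\mathbf y_i,\mathbf w_j\rangle}{\|\mathbf w_j\|^2}\mathbf w_j$, with $w_{ij}$ the $j$-th entry of $\mathbf w_i$. *)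

theory Defs
  imports "HOL-Probability.Probability"
begin

text \<open>Vectors in R^N are modelled as functions nat => real, only the entries
  with index < N being relevant (entries 0..N-1 correspond to 1..N).\<close>

definition ipN :: "nat \<Rightarrow> (nat \<Rightarrow> real) \<Rightarrow> (nat \<Rightarrow> real) \<Rightarrow> real" where
  "ipN N u v = (\<Sum>j<N. u j * v j)"

fun gs_list :: "nat \<Rightarrow> (nat \<Rightarrow> nat \<Rightarrow> real) \<Rightarrow> nat \<Rightarrow> (nat \<Rightarrow> real) list" where
  "gs_list N y 0 = []"
| "gs_list N y (Suc n) =
     (let ws = gs_list N y n
      in ws @ [(\<lambda>c. y n c - (\<Sum>j<n. (ipN N (y n) (ws ! j) / ipN N (ws ! j) (ws ! j)) * (ws ! j) c))])"

definition gs :: "nat \<Rightarrow> (nat \<Rightarrow> nat \<Rightarrow> real) \<Rightarrow> nat \<Rightarrow> nat \<Rightarrow> real" where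
  "gs N y i = gs_list N y (Suc i) ! i"

definition gauss_space :: "nat \<Rightarrow> (nat \<times> nat \<Rightarrow> real) measure" where
  "gauss_space N = PiM ({..<N} \<times> {..<N}) (\<lambda>_. density lborel std_normal_density)"

definition gs_min_diff :: "nat \<Rightarrow> (nat \<Rightarrow> real) \<Rightarrow> nat \<Rightarrow> (nat \<times> nat \<Rightarrow> real) \<Rightarrow> real" where
  "gs_min_diff k a N \<omega> =
     (let y = (\<lambda>i j. \<omega> (i, j)) in
      real N powr (2 / real k) *
        (Min ((\<lambda>j. \<Sum>i<k. a i * (gs N y i j)\<^sup>2) ` {..<N})
         - Min ((\<lambda>j. \<Sum>i<k. a i * (y i j)\<^sup>2) ` {..<N})))"

end

theory Submission
  imports Defs
begin

lemma SN_prob: "prob_space std_normal_distribution"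
  using real_dist_normal_dist by (simp add: real_distribution_def)

interpretation SN: prob_space std_normal_distribution by (rule SN_prob)

lemma SN_one[simp]: "measure std_normal_distribution UNIV = 1"
  using SN.prob_space by simp

interpretation SNP: product_prob_space "\<lambda>_::nat\<times>nat. std_normal_distribution" UNIV
  by (simp add: product_prob_space_def product_prob_space_axioms_def product_sigma_finite_def
      SN_prob prob_space_imp_sigma_finite)

lemma gauss_prob: "prob_space (gauss_space N)"
  unfolding gauss_space_def by (intro prob_space_PiM SN_prob)

abbreviation PM :: "(nat\<times>nat) set \<Rightarrow> (nat \<times> nat \<Rightarrow> real) measure" where
  "PM I \<equiv> PiM I (\<lambda>_. std_normal_distribution)"

lemma PM_prob: "prob_space (PM I)"
  by (intro prob_space_PiM SN_prob)

lemma moment_prod: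
  fixes f :: "nat\<times>nat \<Rightarrow> real \<Rightarrow> real"
  assumes "finite I" "\<And>p. p\<in>I \<Longrightarrow> integrable std_normal_distribution (f p)"
  shows "integrable (PM I) (\<lambda>\<omega>. \<Prod>p\<in>I. f p (\<omega> p))"
   and "(\<integral>\<omega>. (\<Prod>p\<in>I. f p (\<omega> p)) \<partial>PM I) = (\<Prod>p\<in>I. integral\<^sup>L std_normal_distribution (f p))"
  using SNP.product_integrable_prod[OF assms] SNP.product_integral_prod[OF assms] by auto

definition Fb :: "(nat\<times>nat) set \<Rightarrow> (real \<Rightarrow> real) \<Rightarrow> nat\<times>nat \<Rightarrow> real \<Rightarrow> real" where
  "Fb A \<phi> p x = (if p \<in> A then \<phi> x else 1)"

lemma prod_Fb:
  assumes "finite I" "A \<subseteq> I"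
  shows "(\<Prod>p\<in>A. \<phi> (\<omega> p)) = (\<Prod>p\<in>I. Fb A \<phi> p (\<omega> p))"
proof -
  have "(\<Prod>p\<in>I. Fb A \<phi> p (\<omega> p)) = (\<Prod>p\<in>I \<inter> A. \<phi> (\<omega> p))"
    unfolding Fb_def using assms by (simp add: prod.inter_restrict)
  also have "I \<inter> A = A" using assms by auto
  finally show ?thesis by simp
qed

lemma prod_if_const:
  assumes "finite I" "A \<subseteq> I"
  shows "(\<Prod>p\<in>I. if p \<in> A then (m::real) else 1) = m ^ card A"
proof -
  have "(\<Prod>p\<in>I. if p \<in> A then (m::real) else 1) = (\<Prod>p\<in>I \<inter> A. m)"
    by (rule prod.inter_restrict[OF assms(1), symmetric])
  also have "I \<inter> A = A" using assms by auto
  finally show ?thesis by simp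
qed

lemma Fb_eq: "Fb A \<phi> p = (if p \<in> A then \<phi> else (\<lambda>_. 1))"
  by (auto simp: Fb_def)

lemma block_moment:
  fixes \<phi> :: "real \<Rightarrow> real" and C :: "nat set" and A :: "nat \<Rightarrow> (nat\<times>nat) set"
  assumes I: "finite I" and C: "finite C"
    and AI: "\<And>c. c \<in> C \<Longrightarrow> A c \<subseteq> I"
    and Ar: "\<And>c. c \<in> C \<Longrightarrow> card (A c) = r"
    and Ad: "\<And>c c'. c \<in> C \<Longrightarrow> c' \<in> C \<Longrightarrow> c \<noteq> c' \<Longrightarrow> A c \<inter> A c' = {}"
    and i1: "integrable std_normal_distribution \<phi>"
    and i2: "integrable std_normal_distribution (\<lambda>x. \<phi> x * \<phi> x)"
  defines "m1 \<equiv> integral\<^sup>L std_normal_distribution \<phi>"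
    and "m2 \<equiv> integral\<^sup>L std_normal_distribution (\<lambda>x. \<phi> x * \<phi> x)"
    and "X \<equiv> (\<lambda>\<omega>. \<Sum>c\<in>C. \<Prod>p\<in>A c. \<phi> (\<omega> p))"
  shows "integrable (PM I) (\<lambda>\<omega>. (X \<omega> - real (card C) * m1 ^ r)\<^sup>2)"
    and "(\<integral>\<omega>. (X \<omega> - real (card C) * m1 ^ r)\<^sup>2 \<partial>PM I) = real (card C) * (m2 ^ r - m1 ^ (2*r))"
proof -
  interpret P: prob_space "PM I" by (rule PM_prob)
  have i1': "integrable std_normal_distribution (Fb B \<phi> p)" for B p
    unfolding Fb_def using i1
    by (cases "p \<in> B") (auto simp: SN.integrable_const)
  have int1: "integrable std_normal_distribution (Fb B \<phi> p)" for B p by (rule i1')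
  have pp: "(\<lambda>x. Fb (A c) \<phi> p x * Fb (A c') \<phi> p x) =
      (if p \<in> A c \<and> p \<in> A c' then (\<lambda>x. \<phi> x * \<phi> x) else if p \<in> A c \<or> p \<in> A c' then \<phi> else (\<lambda>x. 1))"
    for c c' p unfolding Fb_def by auto
  have int2: "integrable std_normal_distribution (\<lambda>x. Fb (A c) \<phi> p x * Fb (A c') \<phi> p x)" for c c' p
    unfolding pp using i1 i2 by (auto simp: SN.integrable_const)
  define P where "P c \<omega> = (\<Prod>p\<in>I. Fb (A c) \<phi> p (\<omega> p))" for c \<omega>
  have XP: "X \<omega> = (\<Sum>c\<in>C. P c \<omega>)" for \<omega>
    unfolding X_def P_def by (intro sum.cong refl prod_Fb I AI)
  have PP: "P c \<omega> * P c' \<omega> = (\<Prod>p\<in>I. Fb (A c) \<phi> p (\<omega> p) * Fb (A c') \<phi> p (\<omega> p))" for c c' \<omega>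
    unfolding P_def by (simp add: prod.distrib)
  have intP: "integrable (PM I) (P c)" for c
    unfolding P_def by (intro moment_prod I int1)
  have intPP: "integrable (PM I) (\<lambda>\<omega>. P c \<omega> * P c' \<omega>)" for c c'
    unfolding PP by (intro moment_prod I int2)
  have EP: "(\<integral>\<omega>. P c \<omega> \<partial>PM I) = m1 ^ r" if "c \<in> C" for c
  proof -
    have "(\<integral>\<omega>. P c \<omega> \<partial>PM I) = (\<Prod>p\<in>I. integral\<^sup>L std_normal_distribution (Fb (A c) \<phi> p))"
      unfolding P_def by (intro moment_prod I int1)
    also have "\<dots> = (\<Prod>p\<in>I. if p \<in> A c then m1 else 1)"
      by (intro prod.cong refl) (auto simp: Fb_eq m1_def SN.prob_space)
    also have "\<dots> = m1 ^ r" using prod_if_const[OF I AI[OF that]] Ar[OF that] by simp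
    finally show ?thesis .
  qed
  have EPP: "(\<integral>\<omega>. P c \<omega> * P c' \<omega> \<partial>PM I) = (if c = c' then m2 ^ r else m1 ^ (2*r))"
    if "c \<in> C" "c' \<in> C" for c c'
  proof -
    have "(\<integral>\<omega>. P c \<omega> * P c' \<omega> \<partial>PM I) =
       (\<Prod>p\<in>I. integral\<^sup>L std_normal_distribution (\<lambda>x. Fb (A c) \<phi> p x * Fb (A c') \<phi> p x))"
      unfolding PP by (intro moment_prod I int2)
    also have "\<dots> = (if c = c' then m2 ^ r else m1 ^ (2*r))"
    proof (cases "c = c'")
      case True
      have "(\<Prod>p\<in>I. integral\<^sup>L std_normal_distribution (\<lambda>x. Fb (A c) \<phi> p x * Fb (A c') \<phi> p x))
          = (\<Prod>p\<in>I. if p \<in> A c then m2 else 1)"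
        unfolding pp using True by (intro prod.cong refl) (auto simp: m2_def SN.prob_space)
      also have "\<dots> = m2 ^ r" using prod_if_const[OF I AI[OF that(1)]] Ar[OF that(1)] by simp
      finally show ?thesis using True by simp
    next
      case False
      have dj: "A c \<inter> A c' = {}" using Ad[OF that False] .
      have "(\<Prod>p\<in>I. integral\<^sup>L std_normal_distribution (\<lambda>x. Fb (A c) \<phi> p x * Fb (A c') \<phi> p x))
          = (\<Prod>p\<in>I. if p \<in> A c \<union> A c' then m1 else 1)"
        unfolding pp using dj by (intro prod.cong refl) (auto simp: m1_def SN.prob_space)
      also have "\<dots> = m1 ^ card (A c \<union> A c')"
        using prod_if_const[of I "A c \<union> A c'"] I AI that by auto
      also have "card (A c \<union> A c') = 2 * r"
        using card_Un_disjoint[of "A c" "A c'"] dj Ar that AI I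
        by (metis finite_subset mult_2)
      finally show ?thesis using False by simp
    qed
    finally show ?thesis .
  qed
  define a where "a = real (card C) * m1 ^ r"
  have expand: "(X \<omega> - a)\<^sup>2 = (\<Sum>c\<in>C. \<Sum>c'\<in>C. P c \<omega> * P c' \<omega>) - 2 * a * (\<Sum>c\<in>C. P c \<omega>) + a\<^sup>2" for \<omega>
    unfolding XP power2_eq_square by (simp add: algebra_simps sum_distrib_left sum_distrib_right)
  have intS2: "integrable (PM I) (\<lambda>\<omega>. \<Sum>c\<in>C. \<Sum>c'\<in>C. P c \<omega> * P c' \<omega>)"
    by (intro Bochner_Integration.integrable_sum intPP)
  have intS1: "integrable (PM I) (\<lambda>\<omega>. \<Sum>c\<in>C. P c \<omega>)"
    by (intro Bochner_Integration.integrable_sum intP)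
  show "integrable (PM I) (\<lambda>\<omega>. (X \<omega> - real (card C) * m1 ^ r)\<^sup>2)"
    unfolding a_def[symmetric] expand using intS1 intS2 by auto
  have "(\<integral>\<omega>. (X \<omega> - a)\<^sup>2 \<partial>PM I) =
      (\<integral>\<omega>. (\<Sum>c\<in>C. \<Sum>c'\<in>C. P c \<omega> * P c' \<omega>) \<partial>PM I) - 2 * a * (\<integral>\<omega>. (\<Sum>c\<in>C. P c \<omega>) \<partial>PM I) + a\<^sup>2"
    unfolding expand using intS1 intS2 by (simp add: P.prob_space)
  also have "(\<integral>\<omega>. (\<Sum>c\<in>C. \<Sum>c'\<in>C. P c \<omega> * P c' \<omega>) \<partial>PM I) = (\<Sum>c\<in>C. \<Sum>c'\<in>C. (if c = c' then m2 ^ r else m1 ^ (2*r)))"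
    using intPP EPP by (simp add: Bochner_Integration.integrable_sum)
  also have "\<dots> = (\<Sum>c\<in>C. m1 ^ (2*r) * real (card C) + (m2 ^ r - m1 ^ (2*r)))"
  proof (intro sum.cong refl)
    fix c assume c: "c \<in> C"
    have "(\<Sum>c'\<in>C. (if c = c' then m2 ^ r else m1 ^ (2*r))) = (\<Sum>c'\<in>C. m1 ^ (2*r) + (if c = c' then m2 ^ r - m1 ^ (2*r) else 0))"
      by (intro sum.cong) auto
    also have "\<dots> = m1 ^ (2*r) * real (card C) + (m2 ^ r - m1 ^ (2*r))"
      using c C by (simp add: sum.distrib)
    finally show "(\<Sum>c'\<in>C. (if c = c' then m2 ^ r else m1 ^ (2*r))) = m1 ^ (2*r) * real (card C) + (m2 ^ r - m1 ^ (2*r))" .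
  qed
  also have "(\<integral>\<omega>. (\<Sum>c\<in>C. P c \<omega>) \<partial>PM I) = (\<Sum>c\<in>C. m1 ^ r)"
    using intP EP by simp
  finally show "(\<integral>\<omega>. (X \<omega> - real (card C) * m1 ^ r)\<^sup>2 \<partial>PM I) = real (card C) * (m2 ^ r - m1 ^ (2*r))"
    unfolding a_def by (simp add: power2_eq_square power_mult algebra_simps)
qed


lemma comp_meas: "p \<in> I \<Longrightarrow> (\<lambda>\<omega>. \<omega> p) \<in> borel_measurable (PM I)"
proof -
  assume "p \<in> I"
  then have "(\<lambda>\<omega>. \<omega> p) \<in> measurable (PM I) std_normal_distribution"
    by (rule measurable_component_singleton)
  moreover have "sets std_normal_distribution = sets borel" by simp
  ultimately show ?thesis using measurable_cong_sets by blast
qed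

lemma block_cheb:
  fixes \<phi> :: "real \<Rightarrow> real" and C :: "nat set" and A :: "nat \<Rightarrow> (nat\<times>nat) set"
  assumes I: "finite I" and C: "finite C"
    and AI: "\<And>c. c \<in> C \<Longrightarrow> A c \<subseteq> I"
    and Ar: "\<And>c. c \<in> C \<Longrightarrow> card (A c) = r"
    and Ad: "\<And>c c'. c \<in> C \<Longrightarrow> c' \<in> C \<Longrightarrow> c \<noteq> c' \<Longrightarrow> A c \<inter> A c' = {}"
    and mphi: "\<phi> \<in> borel_measurable borel"
    and i1: "integrable std_normal_distribution \<phi>"
    and i2: "integrable std_normal_distribution (\<lambda>x. \<phi> x * \<phi> x)"
    and b: "b > 0"
  shows "measure (PM I) {\<omega> \<in> space (PM I). b \<le> \<bar>(\<Sum>c\<in>C. \<Prod>p\<in>A c. \<phi> (\<omega> p)) - real (card C) * (integral\<^sup>L std_normal_distribution \<phi>) ^ r\<bar>}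
     \<le> real (card C) * ((integral\<^sup>L std_normal_distribution (\<lambda>x. \<phi> x * \<phi> x)) ^ r - (integral\<^sup>L std_normal_distribution \<phi>) ^ (2*r)) / b\<^sup>2"
proof -
  interpret P: prob_space "PM I" by (rule PM_prob)
  have bm1: "integrable (PM I) (\<lambda>\<omega>. ((\<Sum>c\<in>C. \<Prod>p\<in>A c. \<phi> (\<omega> p)) - real (card C) * (integral\<^sup>L std_normal_distribution \<phi>) ^ r)\<^sup>2)"
    by (rule block_moment(1)[OF I C AI Ar Ad i1 i2])
  have bm2: "(\<integral>\<omega>. ((\<Sum>c\<in>C. \<Prod>p\<in>A c. \<phi> (\<omega> p)) - real (card C) * (integral\<^sup>L std_normal_distribution \<phi>) ^ r)\<^sup>2 \<partial>PM I)
     = real (card C) * ((integral\<^sup>L std_normal_distribution (\<lambda>x. \<phi> x * \<phi> x)) ^ r - (integral\<^sup>L std_normal_distribution \<phi>) ^ (2*r))"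
    by (rule block_moment(2)[OF I C AI Ar Ad i1 i2])
  have cm: "(\<lambda>\<omega>. \<phi> (\<omega> p)) \<in> borel_measurable (PM I)" if "c \<in> C" "p \<in> A c" for c p
  proof -
    have "p \<in> I" using that AI by blast
    then show ?thesis by (rule measurable_compose[OF comp_meas mphi])
  qed
  have m0: "(\<lambda>\<omega>. (\<Sum>c\<in>C. \<Prod>p\<in>A c. \<phi> (\<omega> p))) \<in> borel_measurable (PM I)"
    apply (rule borel_measurable_sum)
    apply (rule borel_measurable_prod)
    apply (erule (1) cm)
    done
  have meas: "(\<lambda>\<omega>. (\<Sum>c\<in>C. \<Prod>p\<in>A c. \<phi> (\<omega> p)) - real (card C) * (integral\<^sup>L std_normal_distribution \<phi>) ^ r) \<in> borel_measurable (PM I)"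
    by (rule borel_measurable_diff[OF m0 borel_measurable_const])
  have 1: "measure (PM I) {\<omega> \<in> space (PM I). b \<le> \<bar>(\<Sum>c\<in>C. \<Prod>p\<in>A c. \<phi> (\<omega> p)) - real (card C) * (integral\<^sup>L std_normal_distribution \<phi>) ^ r\<bar>}
     \<le> (\<integral>\<omega>. ((\<Sum>c\<in>C. \<Prod>p\<in>A c. \<phi> (\<omega> p)) - real (card C) * (integral\<^sup>L std_normal_distribution \<phi>) ^ r)\<^sup>2 \<partial>PM I) / b\<^sup>2"
    by (rule P.second_moment_method[OF meas bm1 b])
  show ?thesis using 1 unfolding bm2 .
qed

lemma SN_m1_id: "integral\<^sup>L std_normal_distribution (\<lambda>x. x) = 0"
  using integral_std_normal_distribution_moment_odd[of 1] by simp
lemma SN_m2_id: "integral\<^sup>L std_normal_distribution (\<lambda>x. x * x) = 1"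
  using std_normal_distribution_even_moments(1)[of 1] by (simp add: power2_eq_square)
lemma SN_i2_id: "integrable std_normal_distribution (\<lambda>x. x * x)"
  using std_normal_distribution_even_moments(2)[of 1] by (simp add: power2_eq_square)
lemma SN_i1_id: "integrable std_normal_distribution (\<lambda>x. x)"
  using integrable_std_normal_distribution_moment[of 1] by simp
lemma SN_m1_sq: "integral\<^sup>L std_normal_distribution (\<lambda>x. x\<^sup>2) = 1"
  using std_normal_distribution_even_moments(1)[of 1] by simp
lemma x4: "(x::real)\<^sup>2 * x\<^sup>2 = x ^ (2*2)" by (simp add: power_mult power2_eq_square numeral_eq_Suc)
lemma SN_m2_sq: "integral\<^sup>L std_normal_distribution (\<lambda>x. x\<^sup>2 * x\<^sup>2) = 3"
proof -
  have "integral\<^sup>L std_normal_distribution (\<lambda>x. x\<^sup>2 * x\<^sup>2) = integral\<^sup>L std_normal_distribution (\<lambda>x. x ^ (2*2))"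
    by (simp only: x4)
  also have "\<dots> = fact (2 * 2) / (2 ^ 2 * fact 2)" by (rule std_normal_distribution_even_moments(1))
  also have "\<dots> = 3" by (simp add: fact_numeral)
  finally show ?thesis .
qed
lemma SN_i2_sq: "integrable std_normal_distribution (\<lambda>x. x\<^sup>2 * x\<^sup>2)"
  unfolding x4 by (rule std_normal_distribution_even_moments(2))
lemma SN_i1_sq: "integrable std_normal_distribution (\<lambda>x. x\<^sup>2)"
  using std_normal_distribution_even_moments(2)[of 1] by simp


lemma length_gs_list[simp]: "length (gs_list N y n) = n"
  by (induction n) (auto simp: Let_def)

lemma gs_list_nth: "j < n \<Longrightarrow> gs_list N y n ! j = gs N y j"
proof (induction n)
  case 0 then show ?case by simp
next
  case (Suc n)
  show ?case
  proof (cases "j < n")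
    case True
    then show ?thesis using Suc by (simp add: Let_def nth_append)
  next
    case False
    then have "j = n" using Suc by simp
    then show ?thesis by (simp add: gs_def)
  qed
qed

lemma gs_rec: "gs N y i = (\<lambda>c. y i c - (\<Sum>j<i. (ipN N (y i) (gs N y j) / ipN N (gs N y j) (gs N y j)) * gs N y j c))"
proof -
  have "gs N y i = gs_list N y (Suc i) ! i" by (simp only: gs_def)
  also have "\<dots> = (\<lambda>c. y i c - (\<Sum>j<i. (ipN N (y i) (gs_list N y i ! j) / ipN N (gs_list N y i ! j) (gs_list N y i ! j)) * (gs_list N y i ! j) c))"
    by (simp add: Let_def nth_append)
  also have "\<dots> = (\<lambda>c. y i c - (\<Sum>j<i. (ipN N (y i) (gs N y j) / ipN N (gs N y j) (gs N y j)) * gs N y j c))"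
    by (intro ext arg_cong2[where f="(-)"] refl sum.cong) (simp_all add: gs_list_nth)
  finally show ?thesis .
qed

lemma ipN_sym: "ipN N u v = ipN N v u"
  by (simp add: ipN_def mult.commute)

lemma ipN_lin_r: "ipN N u (\<lambda>c. v c + (\<Sum>l\<in>S. L l * z l c)) = ipN N u v + (\<Sum>l\<in>S. L l * ipN N u (z l))"
proof -
  have "ipN N u (\<lambda>c. v c + (\<Sum>l\<in>S. L l * z l c)) = (\<Sum>c<N. u c * v c + (\<Sum>l\<in>S. u c * (L l * z l c)))"
    unfolding ipN_def by (simp only: distrib_left sum_distrib_left)
  also have "\<dots> = ipN N u v + (\<Sum>c<N. \<Sum>l\<in>S. u c * (L l * z l c))"
    unfolding ipN_def by (simp only: sum.distrib)
  also have "(\<Sum>c<N. \<Sum>l\<in>S. u c * (L l * z l c)) = (\<Sum>l\<in>S. \<Sum>c<N. u c * (L l * z l c))"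
    by (rule sum.swap)
  also have "\<dots> = (\<Sum>l\<in>S. L l * ipN N u (z l))"
    unfolding ipN_def by (simp only: sum_distrib_left mult.left_commute)
  finally show ?thesis .
qed

lemma ipN_lin_l: "ipN N (\<lambda>c. v c + (\<Sum>l\<in>S. L l * z l c)) u = ipN N v u + (\<Sum>l\<in>S. L l * ipN N (z l) u)"
proof -
  have "ipN N (\<lambda>c. v c + (\<Sum>l\<in>S. L l * z l c)) u = ipN N u (\<lambda>c. v c + (\<Sum>l\<in>S. L l * z l c))"
    by (rule ipN_sym)
  also have "\<dots> = ipN N u v + (\<Sum>l\<in>S. L l * ipN N u (z l))" by (rule ipN_lin_r)
  also have "\<dots> = ipN N v u + (\<Sum>l\<in>S. L l * ipN N (z l) u)" by (simp add: ipN_sym)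
  finally show ?thesis .
qed

lemma sum_bound:
  fixes f :: "nat \<Rightarrow> real"
  assumes "\<And>l. l < k \<Longrightarrow> \<bar>f l\<bar> \<le> B"
  shows "\<bar>\<Sum>l<k. f l\<bar> \<le> real k * B"
proof -
  have "\<bar>\<Sum>l<k. f l\<bar> \<le> (\<Sum>l<k. \<bar>f l\<bar>)" by (rule sum_abs)
  also have "\<dots> \<le> (\<Sum>l<k. B)" by (intro sum_mono) (simp add: assms)
  finally show ?thesis by simp
qed

definition CC :: "nat \<Rightarrow> real" where "CC k = 2 * (real k + 1)^2"
definition eta0 :: "nat \<Rightarrow> real" where "eta0 k = 1 / (2 * (1 + 2 * real k + 2 * (real k)^2 * CC k))"

lemma CC_pos: "CC k > 0" by (simp add: CC_def)
lemma eta0_pos: "eta0 k > 0" using CC_pos[of k] by (simp add: eta0_def add_pos_nonneg)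

lemma eta0_CC: "k \<ge> 1 \<Longrightarrow> CC k * eta0 k \<le> 1"
proof -
  assume k: "k \<ge> 1"
  have C: "CC k > 0" by (rule CC_pos)
  have "CC k \<le> 2 * (1 + 2 * real k + 2 * (real k)^2 * CC k)"
  proof -
    have "1 \<le> (real k)^2" using k by simp
    then have "CC k \<le> (real k)^2 * CC k" using C by simp
    moreover have "real k \<ge> 0" by simp
    moreover have "2 * (1 + 2 * real k + 2 * (real k)^2 * CC k) = 2 + 4*real k + 4*((real k)^2 * CC k)" by (simp add: algebra_simps)
    ultimately show ?thesis using C k by linarith
  qed
  then show ?thesis unfolding eta0_def using C by (simp add: field_simps)
qed

lemma eta0_le1: "eta0 k \<le> 1"
proof -
  have "0 \<le> 2 * real k + 2 * (real k)^2 * CC k" using CC_pos[of k] by simp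
  then show ?thesis unfolding eta0_def by (simp add: field_simps)
qed

lemma eta0_half: "0 \<le> \<eta> \<Longrightarrow> \<eta> \<le> eta0 k \<Longrightarrow> \<eta> * (1 + 2 * real k + 2 * (real k)^2 * CC k) \<le> 1/2"
proof -
  assume "0 \<le> \<eta>" "\<eta> \<le> eta0 k"
  have P: "0 < 1 + 2 * real k + 2 * (real k)^2 * CC k" using CC_pos[of k] by (simp add: add_pos_nonneg)
  have "\<eta> * (1 + 2 * real k + 2 * (real k)^2 * CC k) \<le> eta0 k * (1 + 2 * real k + 2 * (real k)^2 * CC k)"
    using \<open>\<eta> \<le> eta0 k\<close> P by (simp add: mult_right_mono)
  also have "\<dots> = 1/2" unfolding eta0_def using P by (simp add: field_simps)
  finally show ?thesis .
qed

lemma abs_prod_le1: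
  fixes a b B :: real
  assumes "\<bar>a\<bar> \<le> 1" "\<bar>b\<bar> \<le> B"
  shows "\<bar>a * b\<bar> \<le> B"
proof -
  have "\<bar>a * b\<bar> = \<bar>a\<bar> * \<bar>b\<bar>" by (simp add: abs_mult)
  also have "\<dots> \<le> 1 * B" using assms by (intro mult_mono) auto
  finally show ?thesis by simp
qed

lemma gs_coeff:
  fixes y :: "nat \<Rightarrow> nat \<Rightarrow> real"
  assumes k: "k \<ge> 1" and N: "N > 0" and eta: "0 \<le> \<eta>" "\<eta> \<le> eta0 k"
    and G: "\<And>l m. l < k \<Longrightarrow> m < k \<Longrightarrow> \<bar>ipN N (y l) (y m) - (if l = m then real N else 0)\<bar> \<le> \<eta> * real N"
  shows "i < k \<Longrightarrow> \<exists>L. (\<forall>l. i \<le> l \<longrightarrow> L l = 0) \<and> (\<forall>l. \<bar>L l\<bar> \<le> CC k * \<eta>) \<and>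
            gs N y i = (\<lambda>c. y i c + (\<Sum>l<k. L l * y l c))"
proof (induction i rule: less_induct)
  case (less i)
  define C where "C = CC k"
  have C0: "C > 0" unfolding C_def by (rule CC_pos)
  have Ceta: "C * \<eta> \<le> 1"
  proof -
    have "C * \<eta> \<le> C * eta0 k" using eta C0 by simp
    also have "\<dots> \<le> 1" unfolding C_def by (rule eta0_CC[OF k])
    finally show ?thesis .
  qed
  have eta1: "\<eta> \<le> 1" using eta eta0_le1[of k] by linarith
  have Nn: "real N > 0" using N by simp
  define ip where "ip l m = ipN N (y l) (y m)" for l m
  have Goff: "\<bar>ip l m\<bar> \<le> \<eta> * real N" if "l < k" "m < k" "l \<noteq> m" for l m
    using G[OF that(1,2)] that(3) by (simp add: ip_def)
  have Gdiag: "ip l l \<ge> real N - \<eta> * real N" if "l < k" for l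
    using G[OF that that] by (simp add: ip_def abs_le_iff)
  have Gall: "\<bar>ip l m\<bar> \<le> 2 * real N" if "l < k" "m < k" for l m
  proof -
    have "\<bar>ip l m\<bar> \<le> real N + \<eta> * real N"
      using G[OF that] by (cases "l = m") (auto simp: ip_def abs_le_iff)
    also have "\<eta> * real N \<le> 1 * real N" using eta1 by (intro mult_right_mono) auto
    finally show ?thesis by simp
  qed
  have ik: "i < k" by (rule less.prems)
  have "\<forall>j. \<exists>L. j < i \<longrightarrow> ((\<forall>l. j \<le> l \<longrightarrow> L l = 0) \<and> (\<forall>l. \<bar>L l\<bar> \<le> C * \<eta>) \<and>
            gs N y j = (\<lambda>c. y j c + (\<Sum>l<k. L l * y l c)))"
    using less.IH ik unfolding C_def by auto
  then obtain LL where LL: "\<And>j. j < i \<Longrightarrow> (\<forall>l. j \<le> l \<longrightarrow> LL j l = 0) \<and> (\<forall>l. \<bar>LL j l\<bar> \<le> C * \<eta>) \<and>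
            gs N y j = (\<lambda>c. y j c + (\<Sum>l<k. LL j l * y l c))"
    by (metis choice)
  have LL0: "LL j l = 0" if "j < i" "j \<le> l" for j l using LL[OF that(1)] that(2) by blast
  have LLb: "\<bar>LL j l\<bar> \<le> C * \<eta>" if "j < i" for j l using LL[OF that] by blast
  have LL1: "\<bar>LL j l\<bar> \<le> 1" if "j < i" for j l using LLb[OF that, of l] Ceta by linarith
  have w: "gs N y j = (\<lambda>c. y j c + (\<Sum>l<k. LL j l * y l c))" if "j < i" for j using LL[OF that] by blast
  have offsum: "\<bar>\<Sum>l<k. LL j l * ip t l\<bar> \<le> real k * (\<eta> * real N)" if "j < i" "t < k" "j \<le> t" for j t
  proof (rule sum_bound)
    fix l assume l: "l < k"
    show "\<bar>LL j l * ip t l\<bar> \<le> \<eta> * real N"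
    proof (cases "j \<le> l")
      case True then show ?thesis using LL0[OF that(1)] eta Nn by simp
    next
      case False
      then have "t \<noteq> l" using that by auto
      then show ?thesis using abs_prod_le1[OF LL1[OF that(1)] Goff[OF that(2) l]] by simp
    qed
  qed
  have offsum': "\<bar>\<Sum>l<k. LL j l * ip l t\<bar> \<le> real k * (\<eta> * real N)" if "j < i" "t < k" "j \<le> t" for j t
    using offsum[OF that] by (simp add: ip_def ipN_sym)
  define r where "r j = ipN N (y i) (gs N y j) / ipN N (gs N y j) (gs N y j)" for j
  have rb: "\<bar>r j\<bar> \<le> 2 * (real k + 1) * \<eta>" if j: "j < i" for j
  proof -
    have jk: "j < k" using j ik by simp
    have A: "ipN N (y i) (gs N y j) = ip i j + (\<Sum>l<k. LL j l * ip i l)"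
      unfolding w[OF j] ipN_lin_r ip_def ..
    have Ab: "\<bar>ipN N (y i) (gs N y j)\<bar> \<le> (real k + 1) * (\<eta> * real N)"
    proof -
      have "\<bar>ip i j\<bar> \<le> \<eta> * real N" using Goff[OF ik jk] j by simp
      moreover have "\<bar>\<Sum>l<k. LL j l * ip i l\<bar> \<le> real k * (\<eta> * real N)"
        using offsum[OF j ik] j by simp
      ultimately show ?thesis unfolding A by (simp add: algebra_simps)
    qed
    have B: "ipN N (gs N y j) (gs N y j) =
        ip j j + (\<Sum>m<k. LL j m * ip j m) + (\<Sum>l<k. LL j l * (ip l j + (\<Sum>m<k. LL j m * ip l m)))"
    proof -
      have "ipN N (gs N y j) (gs N y j) = ipN N (y j) (gs N y j) + (\<Sum>l<k. LL j l * ipN N (y l) (gs N y j))"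
        by (subst (1) w[OF j]) (rule ipN_lin_l)
      also have "\<dots> = ip j j + (\<Sum>m<k. LL j m * ip j m) + (\<Sum>l<k. LL j l * (ip l j + (\<Sum>m<k. LL j m * ip l m)))"
        unfolding w[OF j] ipN_lin_r ip_def ..
      finally show ?thesis .
    qed
    have B1: "\<bar>\<Sum>m<k. LL j m * ip j m\<bar> \<le> real k * (\<eta> * real N)"
      using offsum[OF j jk] by simp
    have B2: "\<bar>\<Sum>l<k. LL j l * (ip l j + (\<Sum>m<k. LL j m * ip l m))\<bar>
        \<le> real k * (\<eta> * real N + C * \<eta> * (real k * (2 * real N)))"
    proof (rule sum_bound)
      fix l assume l: "l < k"
      have inner: "\<bar>\<Sum>m<k. LL j m * ip l m\<bar> \<le> real k * (2 * real N)"
        by (rule sum_bound) (rule abs_prod_le1[OF LL1[OF j] Gall[OF l]])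
      have t1: "\<bar>LL j l * ip l j\<bar> \<le> \<eta> * real N"
      proof (cases "j \<le> l")
        case True then show ?thesis using LL0[OF j] eta Nn by simp
      next
        case False then show ?thesis using abs_prod_le1[OF LL1[OF j] Goff[OF l jk]] by simp
      qed
      have t2: "\<bar>LL j l * (\<Sum>m<k. LL j m * ip l m)\<bar> \<le> C * \<eta> * (real k * (2 * real N))"
        unfolding abs_mult using LLb[OF j] inner C0 eta by (intro mult_mono) auto
      show "\<bar>LL j l * (ip l j + (\<Sum>m<k. LL j m * ip l m))\<bar> \<le> \<eta> * real N + C * \<eta> * (real k * (2 * real N))"
        using t1 t2 by (simp add: distrib_left)
    qed
    have Bb: "ipN N (gs N y j) (gs N y j) \<ge> real N / 2"
    proof -
      have h: "\<eta> * (1 + 2 * real k + 2 * (real k)^2 * C) \<le> 1/2"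
        using eta0_half[OF eta] unfolding C_def .
      have "ipN N (gs N y j) (gs N y j) \<ge> (real N - \<eta> * real N) - real k * (\<eta> * real N)
          - real k * (\<eta> * real N + C * \<eta> * (real k * (2 * real N)))"
        unfolding B using Gdiag[OF jk] B1 B2 by (smt (verit))
      moreover have "(real N - \<eta> * real N) - real k * (\<eta> * real N)
          - real k * (\<eta> * real N + C * \<eta> * (real k * (2 * real N)))
          = real N - real N * (\<eta> * (1 + 2 * real k + 2 * (real k)^2 * C))"
        by (simp add: algebra_simps power2_eq_square)
      moreover have "real N * (\<eta> * (1 + 2 * real k + 2 * (real k)^2 * C)) \<le> real N * (1/2)"
        using h Nn by (intro mult_left_mono) auto
      ultimately show ?thesis by simp
    qed
    have Bpos: "ipN N (gs N y j) (gs N y j) > 0" using Bb Nn by simp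
    have "\<bar>r j\<bar> = \<bar>ipN N (y i) (gs N y j)\<bar> / ipN N (gs N y j) (gs N y j)"
      unfolding r_def using Bpos by (simp add: abs_divide)
    also have "\<dots> \<le> ((real k + 1) * (\<eta> * real N)) / (real N / 2)"
      using Ab Bb Bpos Nn eta by (intro frac_le) auto
    also have "\<dots> = 2 * (real k + 1) * \<eta>" using Nn by (simp add: field_simps)
    finally show ?thesis .
  qed
  define L' where "L' l = - (if l < i then r l else 0) - (\<Sum>j<i. r j * LL j l)" for l
  have L'0: "L' l = 0" if "i \<le> l" for l
  proof -
    have "(\<Sum>j<i. r j * LL j l) = 0" using LL0 that by (intro sum.neutral) auto
    then show ?thesis using that unfolding L'_def by simp
  qed
  have L'b: "\<bar>L' l\<bar> \<le> CC k * \<eta>" for l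
  proof -
    have t1: "\<bar>if l < i then r l else 0\<bar> \<le> 2 * (real k + 1) * \<eta>"
      using rb eta by auto
    have t2: "\<bar>\<Sum>j<i. r j * LL j l\<bar> \<le> real i * (2 * (real k + 1) * \<eta>)"
    proof (rule sum_bound)
      fix j assume j: "j < i"
      have "\<bar>r j * LL j l\<bar> = \<bar>LL j l * r j\<bar>" by (simp add: mult.commute)
      also have "\<dots> \<le> 2 * (real k + 1) * \<eta>" by (rule abs_prod_le1[OF LL1[OF j] rb[OF j]])
      finally show "\<bar>r j * LL j l\<bar> \<le> 2 * (real k + 1) * \<eta>" .
    qed
    have t3: "real i * (2 * (real k + 1) * \<eta>) \<le> real k * (2 * (real k + 1) * \<eta>)"
      using ik eta by (intro mult_right_mono) auto
    have "\<bar>L' l\<bar> \<le> 2 * (real k + 1) * \<eta> + real k * (2 * (real k + 1) * \<eta>)"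
      unfolding L'_def using t1 t2 t3 by (smt (verit))
    also have "\<dots> = CC k * \<eta>" unfolding CC_def by (simp add: algebra_simps power2_eq_square)
    finally show ?thesis .
  qed
  have rep: "gs N y i = (\<lambda>c. y i c + (\<Sum>l<k. L' l * y l c))"
  proof
    fix c
    have e1: "(\<Sum>j<i. r j * y j c) = (\<Sum>l<k. (if l < i then r l else 0) * y l c)"
    proof -
      have "(\<Sum>l<k. (if l < i then r l else 0) * y l c) = (\<Sum>l<k. if l \<in> {..<i} then r l * y l c else 0)"
        by (intro sum.cong) auto
      also have "\<dots> = (\<Sum>l\<in>{..<k} \<inter> {..<i}. r l * y l c)"
        by (rule sum.inter_restrict[symmetric]) simp
      also have "{..<k} \<inter> {..<i} = {..<i}" using ik by auto
      finally show ?thesis by simp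
    qed
    have e2: "(\<Sum>j<i. r j * (\<Sum>l<k. LL j l * y l c)) = (\<Sum>l<k. (\<Sum>j<i. r j * LL j l) * y l c)"
    proof -
      have "(\<Sum>j<i. r j * (\<Sum>l<k. LL j l * y l c)) = (\<Sum>j<i. \<Sum>l<k. r j * LL j l * y l c)"
        by (simp add: sum_distrib_left mult.assoc)
      also have "\<dots> = (\<Sum>l<k. \<Sum>j<i. r j * LL j l * y l c)" by (rule sum.swap)
      also have "\<dots> = (\<Sum>l<k. (\<Sum>j<i. r j * LL j l) * y l c)" by (simp add: sum_distrib_right)
      finally show ?thesis .
    qed
    have "gs N y i c = y i c - (\<Sum>j<i. r j * gs N y j c)"
      by (subst gs_rec) (simp add: r_def)
    also have "(\<Sum>j<i. r j * gs N y j c) = (\<Sum>j<i. r j * y j c + r j * (\<Sum>l<k. LL j l * y l c))"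
      by (intro sum.cong refl) (simp add: w distrib_left)
    also have "\<dots> = (\<Sum>l<k. (if l < i then r l else 0) * y l c) + (\<Sum>l<k. (\<Sum>j<i. r j * LL j l) * y l c)"
      by (simp only: sum.distrib e1 e2)
    also have "y i c - \<dots> = y i c + (\<Sum>l<k. L' l * y l c)"
      unfolding L'_def by (simp add: algebra_simps sum.distrib sum_subtractf sum_negf)
    finally show "gs N y i c = y i c + (\<Sum>l<k. L' l * y l c)" .
  qed
  show ?case using L'0 L'b rep by blast
qed


lemma sq_diff_bound:
  fixes Y L :: "nat \<Rightarrow> real"
  assumes eps: "0 \<le> \<epsilon>" and Lb: "\<And>l. l < k \<Longrightarrow> \<bar>L l\<bar> \<le> \<epsilon>" and i: "i < k"
  shows "\<bar>(Y i + (\<Sum>l<k. L l * Y l))\<^sup>2 - (Y i)\<^sup>2\<bar> \<le> (2 * \<epsilon> * real k + \<epsilon>^2 * (real k)^2) * (\<Sum>l<k. (Y l)\<^sup>2)"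
proof -
  define S where "S = (\<Sum>l<k. (Y l)\<^sup>2)"
  define e where "e = (\<Sum>l<k. L l * Y l)"
  have YS: "(Y l)\<^sup>2 \<le> S" if "l < k" for l
    unfolding S_def using that by (intro member_le_sum) auto
  have S0: "S \<ge> 0" unfolding S_def by (intro sum_nonneg) auto
  have YY: "\<bar>Y l\<bar> * \<bar>Y m\<bar> \<le> S" if "l < k" "m < k" for l m
  proof -
    have "2 * (\<bar>Y l\<bar> * \<bar>Y m\<bar>) \<le> (Y l)\<^sup>2 + (Y m)\<^sup>2"
      using sum_squares_bound[of "\<bar>Y l\<bar>" "\<bar>Y m\<bar>"] by simp
    then show ?thesis using YS[OF that(1)] YS[OF that(2)] by linarith
  qed
  have eb: "\<bar>e\<bar> \<le> \<epsilon> * (\<Sum>l<k. \<bar>Y l\<bar>)"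
  proof -
    have "\<bar>e\<bar> \<le> (\<Sum>l<k. \<bar>L l * Y l\<bar>)" unfolding e_def by (rule sum_abs)
    also have "\<dots> \<le> (\<Sum>l<k. \<epsilon> * \<bar>Y l\<bar>)"
      unfolding abs_mult by (intro sum_mono mult_right_mono) (auto simp: Lb)
    finally show ?thesis by (simp add: sum_distrib_left)
  qed
  have t1: "\<bar>2 * Y i * e\<bar> \<le> 2 * \<epsilon> * real k * S"
  proof -
    have "\<bar>2 * Y i * e\<bar> = 2 * (\<bar>Y i\<bar> * \<bar>e\<bar>)" by (simp add: abs_mult)
    also have "\<dots> \<le> 2 * (\<bar>Y i\<bar> * (\<epsilon> * (\<Sum>l<k. \<bar>Y l\<bar>)))"
      using eb by (intro mult_left_mono) auto
    also have "\<dots> = 2 * (\<epsilon> * (\<Sum>l<k. \<bar>Y i\<bar> * \<bar>Y l\<bar>))"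
      by (simp add: sum_distrib_left algebra_simps)
    also have "\<dots> \<le> 2 * (\<epsilon> * (\<Sum>l<k. S))"
    proof -
      have "(\<Sum>l<k. \<bar>Y i\<bar> * \<bar>Y l\<bar>) \<le> (\<Sum>l<k. S)" by (intro sum_mono YY i) auto
      then show ?thesis using eps by (intro mult_left_mono) auto
    qed
    also have "\<dots> = 2 * \<epsilon> * real k * S" by simp
    finally show ?thesis .
  qed
  have t2: "e\<^sup>2 \<le> \<epsilon>^2 * (real k)^2 * S"
  proof -
    have "e\<^sup>2 = \<bar>e\<bar> * \<bar>e\<bar>" by (simp add: power2_eq_square)
    also have "\<dots> \<le> (\<epsilon> * (\<Sum>l<k. \<bar>Y l\<bar>)) * (\<epsilon> * (\<Sum>l<k. \<bar>Y l\<bar>))"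
      using eb by (intro mult_mono) auto
    also have "\<dots> = \<epsilon>^2 * (\<Sum>l<k. \<Sum>m<k. \<bar>Y l\<bar> * \<bar>Y m\<bar>)"
      by (simp add: power2_eq_square sum_product algebra_simps)
    also have "\<dots> \<le> \<epsilon>^2 * (\<Sum>l<k. \<Sum>m<k. S)"
    proof -
      have "(\<Sum>l<k. \<Sum>m<k. \<bar>Y l\<bar> * \<bar>Y m\<bar>) \<le> (\<Sum>l<k. \<Sum>m<k. S)"
        by (intro sum_mono YY) auto
      then show ?thesis by (intro mult_left_mono) auto
    qed
    also have "\<dots> = \<epsilon>^2 * (real k)^2 * S" by (simp add: power2_eq_square)
    finally show ?thesis .
  qed
  have "(Y i + e)\<^sup>2 - (Y i)\<^sup>2 = 2 * Y i * e + e\<^sup>2" by (simp add: power2_eq_square algebra_simps)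
  then have "\<bar>(Y i + e)\<^sup>2 - (Y i)\<^sup>2\<bar> = \<bar>2 * Y i * e + e\<^sup>2\<bar>" by simp
  also have "\<dots> \<le> \<bar>2 * Y i * e\<bar> + \<bar>e\<^sup>2\<bar>" by (rule abs_triangle_ineq)
  also have "\<bar>e\<^sup>2\<bar> = e\<^sup>2" by simp
  finally have "\<bar>(Y i + e)\<^sup>2 - (Y i)\<^sup>2\<bar> \<le> 2 * \<epsilon> * real k * S + \<epsilon>^2 * (real k)^2 * S"
    using t1 t2 by linarith
  then show ?thesis unfolding e_def S_def by (simp add: algebra_simps)
qed

definition amin :: "nat \<Rightarrow> (nat \<Rightarrow> real) \<Rightarrow> real" where
  "amin k a = Min (a ` {..<k})"

lemma amin_pos: "k \<ge> 1 \<Longrightarrow> (\<And>i. i < k \<Longrightarrow> a i > 0) \<Longrightarrow> amin k a > 0"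
proof -
  assume k: "k \<ge> 1" and ap: "\<And>i. i < k \<Longrightarrow> a i > 0"
  have "0 \<in> {..<k}" using k by simp
  then have ne: "a ` {..<k} \<noteq> {}" by blast
  show ?thesis unfolding amin_def using ne ap by (subst Min_gr_iff) auto
qed

lemma amin_le: "i < k \<Longrightarrow> amin k a \<le> a i"
  unfolding amin_def by (intro Min_le) auto

lemma q_comp:
  fixes Y :: "nat \<Rightarrow> real" and L :: "nat \<Rightarrow> nat \<Rightarrow> real"
  assumes k: "k \<ge> 1" and apos: "\<And>i. i < k \<Longrightarrow> a i > 0" and eps: "0 \<le> \<epsilon>"
    and Lb: "\<And>i l. i < k \<Longrightarrow> l < k \<Longrightarrow> \<bar>L i l\<bar> \<le> \<epsilon>"
  shows "\<bar>(\<Sum>i<k. a i * (Y i + (\<Sum>l<k. L i l * Y l))\<^sup>2) - (\<Sum>i<k. a i * (Y i)\<^sup>2)\<bar>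
     \<le> ((\<Sum>i<k. a i) * (2 * \<epsilon> * real k + \<epsilon>^2 * (real k)^2) / amin k a) * (\<Sum>i<k. a i * (Y i)\<^sup>2)"
proof -
  define S where "S = (\<Sum>l<k. (Y l)\<^sup>2)"
  define \<beta> where "\<beta> = 2 * \<epsilon> * real k + \<epsilon>^2 * (real k)^2"
  define A where "A = (\<Sum>i<k. a i)"
  define Q where "Q = (\<Sum>i<k. a i * (Y i)\<^sup>2)"
  have b0: "\<beta> \<ge> 0" unfolding \<beta>_def using eps by simp
  have A0: "A \<ge> 0" unfolding A_def using apos by (intro sum_nonneg) (simp add: less_imp_le)
  have am: "amin k a > 0" by (rule amin_pos[OF k apos])
  have "\<bar>(\<Sum>i<k. a i * (Y i + (\<Sum>l<k. L i l * Y l))\<^sup>2) - Q\<bar>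
      = \<bar>\<Sum>i<k. a i * ((Y i + (\<Sum>l<k. L i l * Y l))\<^sup>2 - (Y i)\<^sup>2)\<bar>"
  proof -
    have "(\<Sum>i<k. a i * ((Y i + (\<Sum>l<k. L i l * Y l))\<^sup>2 - (Y i)\<^sup>2)) =
      (\<Sum>i<k. a i * (Y i + (\<Sum>l<k. L i l * Y l))\<^sup>2) - Q"
      unfolding Q_def right_diff_distrib by (rule sum_subtractf)
    then show ?thesis by simp
  qed
  also have "\<dots> \<le> (\<Sum>i<k. \<bar>a i * ((Y i + (\<Sum>l<k. L i l * Y l))\<^sup>2 - (Y i)\<^sup>2)\<bar>)" by (rule sum_abs)
  also have "\<dots> \<le> (\<Sum>i<k. a i * (\<beta> * S))"
  proof (intro sum_mono)
    fix i assume i: "i \<in> {..<k}"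
    have "\<bar>(Y i + (\<Sum>l<k. L i l * Y l))\<^sup>2 - (Y i)\<^sup>2\<bar> \<le> \<beta> * S"
      unfolding \<beta>_def S_def using i by (intro sq_diff_bound eps Lb) auto
    then have "a i * \<bar>(Y i + (\<Sum>l<k. L i l * Y l))\<^sup>2 - (Y i)\<^sup>2\<bar> \<le> a i * (\<beta> * S)"
      using apos[of i] i by (intro mult_left_mono) auto
    moreover have "\<bar>a i\<bar> = a i" using apos[of i] i by simp
    ultimately show "\<bar>a i * ((Y i + (\<Sum>l<k. L i l * Y l))\<^sup>2 - (Y i)\<^sup>2)\<bar> \<le> a i * (\<beta> * S)"
      unfolding abs_mult by simp
  qed
  also have "\<dots> = A * \<beta> * S" unfolding A_def by (simp add: sum_distrib_right mult.assoc)
  also have "\<dots> \<le> A * \<beta> * (Q / amin k a)"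
  proof -
    have "amin k a * S = (\<Sum>l<k. amin k a * (Y l)\<^sup>2)" unfolding S_def by (simp add: sum_distrib_left)
    also have "\<dots> \<le> Q" unfolding Q_def by (intro sum_mono mult_right_mono amin_le) auto
    finally have "S \<le> Q / amin k a" using am by (simp add: field_simps)
    then show ?thesis using A0 b0 by (intro mult_left_mono) auto
  qed
  also have "A * \<beta> * (Q / amin k a) = (A * \<beta> / amin k a) * Q" by simp
  finally show ?thesis unfolding Q_def A_def \<beta>_def .
qed

lemma min_comp:
  fixes Qw Qy :: "nat \<Rightarrow> real"
  assumes D: "finite D" "D \<noteq> {}" and pos: "\<And>c. c \<in> D \<Longrightarrow> Qw c \<ge> 0"
    and rho: "\<rho> \<ge> 0" and cmp: "\<And>c. c \<in> D \<Longrightarrow> \<bar>Qw c - Qy c\<bar> \<le> \<rho> * Qy c"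
  shows "\<bar>Min (Qw ` D) - Min (Qy ` D)\<bar> \<le> \<rho> * Min (Qy ` D)"
proof -
  have "Min (Qy ` D) \<in> Qy ` D" using D by (intro Min_in) auto
  then obtain cy where cy: "cy \<in> D" "Qy cy = Min (Qy ` D)" by (metis imageE)
  have "Min (Qw ` D) \<in> Qw ` D" using D by (intro Min_in) auto
  then obtain cw where cw: "cw \<in> D" "Qw cw = Min (Qw ` D)" by (metis imageE)
  have up: "Min (Qw ` D) \<le> (1 + \<rho>) * Min (Qy ` D)"
  proof -
    have "Min (Qw ` D) \<le> Qw cy" using D cy by (intro Min_le) auto
    also have "\<dots> \<le> (1 + \<rho>) * Qy cy" using cmp[OF cy(1)] by (simp add: algebra_simps abs_le_iff)
    finally show ?thesis using cy by simp
  qed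
  have lo: "Min (Qw ` D) \<ge> (1 - \<rho>) * Min (Qy ` D)"
  proof (cases "\<rho> \<le> 1")
    case True
    have "(1 - \<rho>) * Min (Qy ` D) \<le> (1 - \<rho>) * Qy cw"
      using True D cw by (intro mult_left_mono Min_le) auto
    also have "\<dots> \<le> Qw cw" using cmp[OF cw(1)] by (simp add: algebra_simps abs_le_iff)
    finally show ?thesis using cw by simp
  next
    case False
    have "Qy cy \<ge> 0"
    proof (rule ccontr)
      assume "\<not> Qy cy \<ge> 0"
      then have "\<rho> * Qy cy \<le> 0" using rho by (simp add: mult_nonneg_nonpos)
      then show False using cmp[OF cy(1)] pos[OF cy(1)] \<open>\<not> Qy cy \<ge> 0\<close> by linarith
    qed
    then have "(1 - \<rho>) * Min (Qy ` D) \<le> 0" using False cy by (simp add: mult_nonpos_nonneg)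
    also have "0 \<le> Min (Qw ` D)" using cw pos by metis
    finally show ?thesis .
  qed
  show ?thesis using up lo by (simp add: abs_le_iff algebra_simps)
qed


lemma comp_any: "(\<lambda>\<omega>. \<omega> p) \<in> borel_measurable (PM I)"
proof (cases "p \<in> I")
  case True then show ?thesis by (rule comp_meas)
next
  case False
  have eq: "\<omega> p = undefined" if "\<omega> \<in> space (PM I)" for \<omega>
  proof -
    have "\<omega> \<in> PiE I (\<lambda>_. space std_normal_distribution)" using that by (simp only: space_PiM)
    then show ?thesis using False by (rule PiE_arb)
  qed
  have "(\<lambda>\<omega>. \<omega> p) \<in> borel_measurable (PM I) \<longleftrightarrow> (\<lambda>\<omega>. undefined::real) \<in> borel_measurable (PM I)"
    by (rule measurable_cong) (rule eq)
  moreover have "(\<lambda>\<omega>. undefined::real) \<in> borel_measurable (PM I)" by (rule measurable_const) simp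
  ultimately show ?thesis by blast
qed

lemma gs_meas: "(\<lambda>\<omega>. gs N (\<lambda>i j. \<omega> (i, j)) i c) \<in> borel_measurable (PM I)"
proof (induction i arbitrary: c rule: less_induct)
  case (less i)
  have IH: "\<And>j c. j < i \<Longrightarrow> (\<lambda>\<omega>. gs N (\<lambda>i j. \<omega> (i,j)) j c) \<in> borel_measurable (PM I)"
    using less by blast
  have C: "\<And>p. (\<lambda>\<omega>. \<omega> p) \<in> borel_measurable (PM I)" by (rule comp_any)
  have ip: "(\<lambda>\<omega>. ipN N (f \<omega>) (g \<omega>)) \<in> borel_measurable (PM I)"
    if "\<And>c. (\<lambda>\<omega>. f \<omega> c) \<in> borel_measurable (PM I)" "\<And>c. (\<lambda>\<omega>. g \<omega> c) \<in> borel_measurable (PM I)" for f g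
    unfolding ipN_def using that by (intro borel_measurable_sum borel_measurable_times) auto
  show ?case
    apply (subst gs_rec)
    apply (intro borel_measurable_diff borel_measurable_sum borel_measurable_times borel_measurable_divide ip C)
    apply (auto intro: IH)
    done
qed

lemma gmd_meas: "gs_min_diff k a N \<in> borel_measurable (gauss_space N)"
proof -
  have G: "\<And>i c. (\<lambda>\<omega>. gs N (\<lambda>i j. \<omega> (i, j)) i c) \<in> borel_measurable (gauss_space N)"
    unfolding gauss_space_def by (rule gs_meas)
  have C: "\<And>p. (\<lambda>\<omega>. \<omega> p) \<in> borel_measurable (gauss_space N)" unfolding gauss_space_def by (rule comp_any)
  show ?thesis
    unfolding gs_min_diff_def Let_def
    by (intro borel_measurable_times borel_measurable_const borel_measurable_diff borel_measurable_Min
        borel_measurable_sum borel_measurable_power G C finite_lessThan)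
qed


lemma ipN_meas: "(\<lambda>\<omega>. ipN N (\<lambda>j. \<omega> (l, j)) (\<lambda>j. \<omega> (m, j))) \<in> borel_measurable (gauss_space N)"
  unfolding ipN_def gauss_space_def
  by (intro borel_measurable_sum borel_measurable_times comp_any)

lemma gram_off:
  assumes l: "l < N" and m: "m < N" and lm: "l \<noteq> m" and b: "b > 0"
  shows "measure (gauss_space N) {\<omega> \<in> space (gauss_space N). b \<le> \<bar>ipN N (\<lambda>j. \<omega> (l, j)) (\<lambda>j. \<omega> (m, j))\<bar>}
     \<le> real N / b\<^sup>2"
proof -
  define I where "I = {..<N} \<times> {..<N}"
  have main: "measure (PM I) {\<omega> \<in> space (PM I). b \<le> \<bar>(\<Sum>c\<in>{..<N}. \<Prod>p\<in>{(l,c),(m,c)}. (\<lambda>x. x) (\<omega> p)) - real (card {..<N}) * (integral\<^sup>L std_normal_distribution (\<lambda>x. x)) ^ 2\<bar>}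
     \<le> real (card {..<N}) * ((integral\<^sup>L std_normal_distribution (\<lambda>x. (\<lambda>x. x) x * (\<lambda>x. x) x)) ^ 2 - (integral\<^sup>L std_normal_distribution (\<lambda>x. x)) ^ (2*2)) / b\<^sup>2"
  proof (rule block_cheb)
    show "finite I" unfolding I_def by simp
    show "finite {..<N}" by simp
    show "{(l, c), (m, c)} \<subseteq> I" if "c \<in> {..<N}" for c :: nat using that l m unfolding I_def by auto
    show "card {(l, c), (m, c)} = 2" for c :: nat using lm by simp
    show "{(l, c), (m, c)} \<inter> {(l, c'), (m, c')} = {}" if "c \<noteq> c'" for c c' :: nat using that by auto
    show "(\<lambda>x. x) \<in> borel_measurable borel" by simp
    show "integrable std_normal_distribution (\<lambda>x. x)" by (rule SN_i1_id)
    show "integrable std_normal_distribution (\<lambda>x. x * x)" by (rule SN_i2_id)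
  qed (rule b)
  have "(\<Sum>c\<in>{..<N}. \<Prod>p\<in>{(l,c),(m,c)}. (\<lambda>x. x) (\<omega> p)) = ipN N (\<lambda>j. \<omega> (l, j)) (\<lambda>j. \<omega> (m, j))" for \<omega> :: "nat \<times> nat \<Rightarrow> real"
    unfolding ipN_def using lm by (intro sum.cong) auto
  then show ?thesis using main unfolding gauss_space_def I_def[symmetric]
    by (simp add: SN_m1_id SN_m2_id)
qed

lemma gram_diag:
  assumes l: "l < N" and b: "b > 0"
  shows "measure (gauss_space N) {\<omega> \<in> space (gauss_space N). b \<le> \<bar>ipN N (\<lambda>j. \<omega> (l, j)) (\<lambda>j. \<omega> (l, j)) - real N\<bar>}
     \<le> 2 * real N / b\<^sup>2"
proof -
  define I where "I = {..<N} \<times> {..<N}"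
  have main: "measure (PM I) {\<omega> \<in> space (PM I). b \<le> \<bar>(\<Sum>c\<in>{..<N}. \<Prod>p\<in>{(l,c)}. (\<lambda>x. x * x) (\<omega> p)) - real (card {..<N}) * (integral\<^sup>L std_normal_distribution (\<lambda>x. x * x)) ^ 1\<bar>}
     \<le> real (card {..<N}) * ((integral\<^sup>L std_normal_distribution (\<lambda>x. (\<lambda>x. x * x) x * (\<lambda>x. x * x) x)) ^ 1 - (integral\<^sup>L std_normal_distribution (\<lambda>x. x * x)) ^ (2*1)) / b\<^sup>2"
  proof (rule block_cheb)
    show "finite I" unfolding I_def by simp
    show "finite {..<N}" by simp
    show "{(l, c)} \<subseteq> I" if "c \<in> {..<N}" for c :: nat using that l unfolding I_def by auto
    show "card {(l, c)} = 1" for c :: nat by simp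
    show "{(l, c)} \<inter> {(l, c')} = {}" if "c \<noteq> c'" for c c' :: nat using that by auto
    show "(\<lambda>x::real. x * x) \<in> borel_measurable borel" by simp
    show "integrable std_normal_distribution (\<lambda>x. x * x)" by (rule SN_i2_id)
    show "integrable std_normal_distribution (\<lambda>x. (x * x) * (x * x))" using SN_i2_sq by (simp add: power2_eq_square)
  qed (rule b)
  have "(\<Sum>c\<in>{..<N}. \<Prod>p\<in>{(l,c)}. (\<lambda>x. x * x) (\<omega> p)) = ipN N (\<lambda>j. \<omega> (l, j)) (\<lambda>j. \<omega> (l, j))" for \<omega> :: "nat \<times> nat \<Rightarrow> real"
    unfolding ipN_def by (intro sum.cong) auto
  then show ?thesis using main unfolding gauss_space_def I_def[symmetric]
    using SN_m2_sq SN_m2_id by (simp add: power2_eq_square mult.commute)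
qed

definition Gbad :: "nat \<Rightarrow> real \<Rightarrow> nat \<Rightarrow> (nat \<times> nat \<Rightarrow> real) set" where
  "Gbad k \<eta> N = {\<omega> \<in> space (gauss_space N). \<exists>l<k. \<exists>m<k.
      \<eta> * real N \<le> \<bar>ipN N (\<lambda>j. \<omega> (l, j)) (\<lambda>j. \<omega> (m, j)) - (if l = m then real N else 0)\<bar>}"

lemma Gbad_bound:
  assumes kN: "k \<le> N" and N: "N > 0" and eta: "\<eta> > 0"
  shows "measure (gauss_space N) (Gbad k \<eta> N) \<le> real k * real k * (2 / (\<eta>^2 * real N))"
proof -
  interpret P: prob_space "gauss_space N" by (rule gauss_prob)
  define E where "E = (\<lambda>(l,m). {\<omega> \<in> space (gauss_space N).
      \<eta> * real N \<le> \<bar>ipN N (\<lambda>j. \<omega> (l, j)) (\<lambda>j. \<omega> (m, j)) - (if l = m then real N else 0)\<bar>})"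
  have Eeq: "Gbad k \<eta> N = (\<Union>lm\<in>{..<k}\<times>{..<k}. E lm)"
  proof (intro set_eqI iffI)
    fix x assume "x \<in> Gbad k \<eta> N"
    then obtain l m where lm: "l < k" "m < k" "x \<in> space (gauss_space N)"
      "\<eta> * real N \<le> \<bar>ipN N (\<lambda>j. x (l, j)) (\<lambda>j. x (m, j)) - (if l = m then real N else 0)\<bar>"
      unfolding Gbad_def by blast
    then have "x \<in> E (l, m)" unfolding E_def by simp
    then show "x \<in> (\<Union>lm\<in>{..<k}\<times>{..<k}. E lm)" using lm by blast
  next
    fix x assume "x \<in> (\<Union>lm\<in>{..<k}\<times>{..<k}. E lm)"
    then obtain l m where lm: "l < k" "m < k" "x \<in> E (l, m)" by blast
    then show "x \<in> Gbad k \<eta> N" unfolding Gbad_def E_def by (simp only: prod.case mem_Collect_eq) blast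
  qed
  have Esets: "E lm \<in> sets (gauss_space N)" for lm
  proof -
    obtain l m where lm: "lm = (l, m)" by fastforce
    have [measurable]: "(\<lambda>\<omega>. ipN N (\<lambda>j. \<omega> (l, j)) (\<lambda>j. \<omega> (m, j))) \<in> borel_measurable (gauss_space N)"
      by (rule ipN_meas)
    show ?thesis unfolding E_def lm prod.case by measurable
  qed
  have Eb: "measure (gauss_space N) (E lm) \<le> 2 / (\<eta>^2 * real N)" if "lm \<in> {..<k}\<times>{..<k}" for lm
  proof -
    obtain l m where lm: "lm = (l, m)" by fastforce
    have l: "l < N" "m < N" using that lm kN by auto
    have b: "\<eta> * real N > 0" using eta N by simp
    have "measure (gauss_space N) (E lm) \<le> 2 * real N / (\<eta> * real N)\<^sup>2"
    proof (cases "l = m")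
      case True
      then show ?thesis unfolding E_def lm using gram_diag[OF l(1) b] by simp
    next
      case False
      have "measure (gauss_space N) (E lm) \<le> real N / (\<eta> * real N)\<^sup>2"
        unfolding E_def lm using gram_off[OF l False b] False by simp
      also have "\<dots> \<le> 2 * real N / (\<eta> * real N)\<^sup>2" by (simp add: divide_right_mono)
      finally show ?thesis .
    qed
    also have "\<dots> = 2 / (\<eta>^2 * real N)" using N eta by (simp add: power2_eq_square field_simps)
    finally show ?thesis .
  qed
  have "measure (gauss_space N) (Gbad k \<eta> N) \<le> (\<Sum>lm\<in>{..<k}\<times>{..<k}. measure (gauss_space N) (E lm))"
    unfolding Eeq by (rule P.finite_measure_subadditive_finite) (auto simp: Esets)
  also have "\<dots> \<le> (\<Sum>lm\<in>{..<k}\<times>{..<k}. 2 / (\<eta>^2 * real N))" by (intro sum_mono Eb)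
  also have "\<dots> = real k * real k * (2 / (\<eta>^2 * real N))" by simp
  finally show ?thesis .
qed


lemma snd_mono: "\<bar>x\<bar> \<le> 1 \<Longrightarrow> std_normal_density 1 \<le> std_normal_density x"
proof -
  assume x: "\<bar>x\<bar> \<le> 1"
  have "x\<^sup>2 \<le> 1" using x by (simp add: abs_le_square_iff[symmetric] abs_le_iff power2_eq_square) (smt (verit) mult_le_one mult_minus_left mult_minus_right abs_le_iff)
  then have "exp (- (1::real)\<^sup>2 / (2 * 1\<^sup>2)) \<le> exp (- x\<^sup>2 / (2 * 1\<^sup>2))" by simp
  then show ?thesis unfolding normal_density_def by (intro mult_left_mono) auto
qed

lemma p_lower:
  assumes s: "0 < s" "s \<le> 1"
  shows "integral\<^sup>L std_normal_distribution (indicator {-s..s} :: real \<Rightarrow> real) \<ge> 2 * std_normal_density 1 * s"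
proof -
  have "integral\<^sup>L std_normal_distribution (indicator {-s..s} :: real \<Rightarrow> real) =
      (\<integral>x. std_normal_density x *\<^sub>R indicator {-s..s} x \<partial>lborel)"
    by (rule integral_density) (auto simp: normal_density_nonneg)
  also have "\<dots> \<ge> (\<integral>x. std_normal_density 1 * indicator {-s..s} x \<partial>lborel)"
  proof (rule integral_mono)
    show "integrable lborel (\<lambda>x. std_normal_density 1 * indicator {-s..s} x :: real)"
      using s by (intro integrable_mult_right integrable_real_indicator) (auto simp: emeasure_lborel_Icc)
    show "integrable lborel (\<lambda>x. std_normal_density x *\<^sub>R indicator {-s..s} x :: real)"
    proof (rule Bochner_Integration.integrable_bound[OF integrable_normal_density])
      show "(\<lambda>x. std_normal_density x *\<^sub>R indicator {-s..s} x :: real) \<in> borel_measurable lborel" by measurable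
      show "AE x in lborel. norm (std_normal_density x *\<^sub>R indicator {-s..s} x :: real) \<le> norm (std_normal_density x)"
        by (auto simp: indicator_def normal_density_nonneg)
    qed simp
    fix x :: real
    show "std_normal_density 1 * indicator {-s..s} x \<le> std_normal_density x *\<^sub>R indicator {-s..s} x"
      using snd_mono[of x] s by (auto simp: indicator_def abs_le_iff)
  qed
  also have "(\<integral>x. std_normal_density 1 * indicator {-s..s} x \<partial>lborel) = std_normal_density 1 * (2 * s)"
    using s by simp
  finally show ?thesis by simp
qed

definition Zq :: "nat \<Rightarrow> (nat \<Rightarrow> real) \<Rightarrow> nat \<Rightarrow> (nat \<times> nat \<Rightarrow> real) \<Rightarrow> real" where
  "Zq k a N \<omega> = Min ((\<lambda>j. \<Sum>i<k. a i * (\<omega> (i, j))\<^sup>2) ` {..<N})"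

definition Tset :: "nat \<Rightarrow> (nat \<Rightarrow> real) \<Rightarrow> real \<Rightarrow> nat \<Rightarrow> (nat \<times> nat \<Rightarrow> real) set" where
  "Tset k a T N = {\<omega> \<in> space (gauss_space N). T < real N powr (2 / real k) * Zq k a N \<omega>}"

lemma nu_facts:
  assumes k: "k \<ge> 1" and N: "N > 0"
  defines "\<nu> \<equiv> real N powr (1 / real k)"
  shows "\<nu> > 0" "\<nu> ^ k = real N" "real N powr (2 / real k) = \<nu> * \<nu>"
proof -
  show "\<nu> > 0" unfolding \<nu>_def using N by simp
  have "\<nu> ^ k = real N powr (real k * (1 / real k))" unfolding \<nu>_def using N by (simp add: powr_power)
  also have "real k * (1 / real k) = 1" using k by simp
  finally show "\<nu> ^ k = real N" using N by simp
  have "\<nu> * \<nu> = real N powr (1 / real k + 1 / real k)" unfolding \<nu>_def by (rule powr_add[symmetric])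
  also have "1 / real k + 1 / real k = 2 / real k" by simp
  finally show "real N powr (2 / real k) = \<nu> * \<nu>" by simp
qed

lemma Tset_sets: "Tset k a T N \<in> sets (gauss_space N)"
proof -
  have C[measurable]: "\<And>p. (\<lambda>\<omega>. \<omega> p) \<in> borel_measurable (gauss_space N)" unfolding gauss_space_def by (rule comp_any)
  have [measurable]: "Zq k a N \<in> borel_measurable (gauss_space N)"
    unfolding Zq_def by measurable
  show ?thesis unfolding Tset_def by measurable
qed

lemma tight_bound:
  assumes k: "k \<ge> 1" and apos: "\<And>i. i < k \<Longrightarrow> a i > 0" and N: "N > 0" and kN: "k \<le> N"
    and \<sigma>: "\<sigma> > 0" and s1: "\<sigma> / real N powr (1 / real k) \<le> 1"
  shows "measure (gauss_space N) (Tset k a ((\<Sum>i<k. a i) * \<sigma>\<^sup>2) N) \<le> 1 / (2 * std_normal_density 1 * \<sigma>) ^ k"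
proof -
  define \<nu> where "\<nu> = real N powr (1 / real k)"
  note nu = nu_facts[OF k N, folded \<nu>_def]
  define s where "s = \<sigma> / \<nu>"
  have s0: "s > 0" unfolding s_def using \<sigma> nu by simp
  have s1': "s \<le> 1" unfolding s_def \<nu>_def using s1 .
  define d1 where "d1 = std_normal_density 1"
  have d1: "d1 > 0" unfolding d1_def by (simp add: normal_density_pos)
  define \<phi> where "\<phi> = (indicator {-s..s} :: real \<Rightarrow> real)"
  define p where "p = integral\<^sup>L std_normal_distribution \<phi>"
  have pl: "p \<ge> 2 * d1 * s" unfolding p_def \<phi>_def d1_def by (rule p_lower[OF s0 s1'])
  have p0: "p > 0" using pl d1 s0 by (smt (verit) mult_pos_pos)
  have \<phi>\<phi>: "(\<lambda>x. \<phi> x * \<phi> x) = \<phi>" unfolding \<phi>_def by (auto simp: indicator_def fun_eq_iff)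
  define Asum where "Asum = (\<Sum>i<k. a i)"
  define I where "I = {..<N} \<times> {..<N}"
  define b where "b = real N * p ^ k"
  have b0: "b > 0" unfolding b_def using N p0 by simp
  have main: "measure (PM I) {\<omega> \<in> space (PM I). b \<le> \<bar>(\<Sum>c\<in>{..<N}. \<Prod>q\<in>{..<k}\<times>{c}. \<phi> (\<omega> q)) - real (card {..<N}) * (integral\<^sup>L std_normal_distribution \<phi>) ^ k\<bar>}
     \<le> real (card {..<N}) * ((integral\<^sup>L std_normal_distribution (\<lambda>x. \<phi> x * \<phi> x)) ^ k - (integral\<^sup>L std_normal_distribution \<phi>) ^ (2*k)) / b\<^sup>2"
  proof (rule block_cheb)
    show "finite I" unfolding I_def by simp
    show "finite {..<N}" by simp
    show "{..<k} \<times> {c} \<subseteq> I" if "c \<in> {..<N}" for c :: nat using that kN unfolding I_def by auto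
    show "card ({..<k} \<times> {c}) = k" for c :: nat by (simp add: card_cartesian_product)
    show "({..<k} \<times> {c}) \<inter> ({..<k} \<times> {c'}) = {}" if "c \<noteq> c'" for c c' :: nat using that by auto
    show "\<phi> \<in> borel_measurable borel" unfolding \<phi>_def by measurable
    show "integrable std_normal_distribution \<phi>"
      unfolding \<phi>_def by (intro integrable_real_indicator) (auto simp: less_top[symmetric])
    then show "integrable std_normal_distribution (\<lambda>x. \<phi> x * \<phi> x)" unfolding \<phi>\<phi> .
  qed (rule b0)
  have sub: "Tset k a (Asum * \<sigma>\<^sup>2) N \<subseteq> {\<omega> \<in> space (PM I). b \<le> \<bar>(\<Sum>c\<in>{..<N}. \<Prod>q\<in>{..<k}\<times>{c}. \<phi> (\<omega> q)) - real (card {..<N}) * (integral\<^sup>L std_normal_distribution \<phi>) ^ k\<bar>}"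
  proof
    fix \<omega> assume \<omega>: "\<omega> \<in> Tset k a (Asum * \<sigma>\<^sup>2) N"
    have sp: "\<omega> \<in> space (PM I)" using \<omega> unfolding Tset_def gauss_space_def I_def by simp
    have big: "Asum * \<sigma>\<^sup>2 < \<nu> * \<nu> * Zq k a N \<omega>" using \<omega> nu unfolding Tset_def by simp
    have zero: "(\<Prod>q\<in>{..<k}\<times>{c}. \<phi> (\<omega> q)) = 0" if c: "c < N" for c
    proof (rule ccontr)
      assume nz: "(\<Prod>q\<in>{..<k}\<times>{c}. \<phi> (\<omega> q)) \<noteq> 0"
      have box: "\<bar>\<omega> (i, c)\<bar> \<le> s" if i: "i < k" for i
      proof (rule ccontr)
        assume "\<not> \<bar>\<omega> (i, c)\<bar> \<le> s"
        then have "\<phi> (\<omega> (i, c)) = 0" unfolding \<phi>_def by (auto simp: indicator_def abs_le_iff)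
        then have "(\<Prod>q\<in>{..<k}\<times>{c}. \<phi> (\<omega> q)) = 0" using i by (intro prod_zero) auto
        then show False using nz by simp
      qed
      have qc: "(\<Sum>i<k. a i * (\<omega> (i, c))\<^sup>2) \<le> Asum * s\<^sup>2"
      proof -
        have "(\<Sum>i<k. a i * (\<omega> (i, c))\<^sup>2) \<le> (\<Sum>i<k. a i * s\<^sup>2)"
        proof (intro sum_mono mult_left_mono)
          fix i assume "i \<in> {..<k}"
          then have "\<bar>\<omega> (i, c)\<bar> \<le> s" "a i > 0" using box apos by auto
          then show "(\<omega> (i, c))\<^sup>2 \<le> s\<^sup>2" "0 \<le> a i" using abs_le_square_iff[of "\<omega> (i,c)" s] s0 by auto
        qed
        then show ?thesis unfolding Asum_def by (simp add: sum_distrib_right)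
      qed
      have "Zq k a N \<omega> \<le> (\<Sum>i<k. a i * (\<omega> (i, c))\<^sup>2)" unfolding Zq_def using c by (intro Min_le) auto
      then have "Zq k a N \<omega> \<le> Asum * s\<^sup>2" using qc by linarith
      then have "\<nu> * \<nu> * Zq k a N \<omega> \<le> \<nu> * \<nu> * (Asum * s\<^sup>2)" using nu by (intro mult_left_mono) auto
      also have "\<nu> * \<nu> * (Asum * s\<^sup>2) = Asum * \<sigma>\<^sup>2" unfolding s_def using nu by (simp add: power2_eq_square field_simps)
      finally show False using big by simp
    qed
    have "(\<Sum>c\<in>{..<N}. \<Prod>q\<in>{..<k}\<times>{c}. \<phi> (\<omega> q)) = 0"
      by (rule sum.neutral) (use zero in blast)
    then show "\<omega> \<in> {\<omega> \<in> space (PM I). b \<le> \<bar>(\<Sum>c\<in>{..<N}. \<Prod>q\<in>{..<k}\<times>{c}. \<phi> (\<omega> q)) - real (card {..<N}) * (integral\<^sup>L std_normal_distribution \<phi>) ^ k\<bar>}"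
      using sp b0 unfolding b_def p_def by simp
  qed
  interpret P: prob_space "PM I" by (rule PM_prob)
  have setsB: "{\<omega> \<in> space (PM I). b \<le> \<bar>(\<Sum>c\<in>{..<N}. \<Prod>q\<in>{..<k}\<times>{c}. \<phi> (\<omega> q)) - real (card {..<N}) * (integral\<^sup>L std_normal_distribution \<phi>) ^ k\<bar>} \<in> sets (PM I)"
  proof -
    have [measurable]: "\<phi> \<in> borel_measurable borel" unfolding \<phi>_def by measurable
    have [measurable]: "\<And>q. (\<lambda>\<omega>. \<omega> q) \<in> borel_measurable (PM I)" by (rule comp_any)
    show ?thesis by measurable
  qed
  have "measure (gauss_space N) (Tset k a (Asum * \<sigma>\<^sup>2) N) \<le> real N * (p ^ k - p ^ (2*k)) / b\<^sup>2"
    using P.finite_measure_mono[OF sub setsB] main unfolding \<phi>\<phi> p_def[symmetric] gauss_space_def I_def[symmetric]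
    by simp
  also have "\<dots> \<le> real N * p ^ k / b\<^sup>2"
    using p0 N by (intro divide_right_mono mult_left_mono) auto
  also have "\<dots> = 1 / (real N * p ^ k)" unfolding b_def using p0 N by (simp add: power2_eq_square field_simps)
  also have "\<dots> \<le> 1 / (2 * d1 * \<sigma>) ^ k"
  proof -
    have "(2 * d1 * s) ^ k \<le> p ^ k" using pl d1 s0 by (intro power_mono) auto
    then have "real N * (2 * d1 * s) ^ k \<le> real N * p ^ k" by (intro mult_left_mono) auto
    moreover have "real N * (2 * d1 * s) ^ k = (2 * d1 * \<sigma>) ^ k"
      unfolding s_def using nu N by (simp add: power_mult_distrib power_divide)
    moreover have "(2 * d1 * \<sigma>) ^ k > 0" using d1 \<sigma> by simp
    ultimately show ?thesis by (intro divide_left_mono) auto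
  qed
  finally show ?thesis unfolding Asum_def d1_def .
qed


definition rho :: "nat \<Rightarrow> (nat \<Rightarrow> real) \<Rightarrow> real \<Rightarrow> real" where
  "rho k a \<eta> = (\<Sum>i<k. a i) * (2 * (CC k * \<eta>) * real k + (CC k * \<eta>)^2 * (real k)^2) / amin k a"

lemma link:
  assumes k: "k \<ge> 1" and apos: "\<And>i. i < k \<Longrightarrow> a i > 0" and N: "N > 0" and kN: "k \<le> N"
    and eta: "0 \<le> \<eta>" "\<eta> \<le> eta0 k"
    and G: "\<And>l m. l < k \<Longrightarrow> m < k \<Longrightarrow>
        \<bar>ipN N (\<lambda>j. \<omega> (l, j)) (\<lambda>j. \<omega> (m, j)) - (if l = m then real N else 0)\<bar> \<le> \<eta> * real N"
  shows "\<bar>gs_min_diff k a N \<omega>\<bar> \<le> rho k a \<eta> * (real N powr (2 / real k) * Zq k a N \<omega>)"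
proof -
  define y where "y = (\<lambda>i j. \<omega> (i, j))"
  have "\<forall>i. \<exists>L. i < k \<longrightarrow> ((\<forall>l. i \<le> l \<longrightarrow> L l = 0) \<and> (\<forall>l. \<bar>L l\<bar> \<le> CC k * \<eta>) \<and>
            gs N y i = (\<lambda>c. y i c + (\<Sum>l<k. L l * y l c)))"
    using gs_coeff[OF k N eta, of y] G unfolding y_def by blast
  then obtain L where L: "\<And>i. i < k \<Longrightarrow> (\<forall>l. \<bar>L i l\<bar> \<le> CC k * \<eta>) \<and>
            gs N y i = (\<lambda>c. y i c + (\<Sum>l<k. L i l * y l c))"
    by metis
  define Qw where "Qw c = (\<Sum>i<k. a i * (gs N y i c)\<^sup>2)" for c
  define Qy where "Qy c = (\<Sum>i<k. a i * (y i c)\<^sup>2)" for c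
  have eps: "0 \<le> CC k * \<eta>" using CC_pos[of k] eta by simp
  have rho0: "rho k a \<eta> \<ge> 0"
  proof -
    have "(\<Sum>i<k. a i) \<ge> 0" using apos by (intro sum_nonneg) (simp add: less_imp_le)
    moreover have "amin k a > 0" by (rule amin_pos[OF k apos])
    ultimately show ?thesis unfolding rho_def using eps by simp
  qed
  have cmp: "\<bar>Qw c - Qy c\<bar> \<le> rho k a \<eta> * Qy c" for c
  proof -
    have "Qw c = (\<Sum>i<k. a i * (y i c + (\<Sum>l<k. L i l * y l c))\<^sup>2)"
      unfolding Qw_def by (intro sum.cong refl) (simp add: L)
    then show ?thesis unfolding Qy_def rho_def
      using q_comp[OF k apos eps, where L=L and Y="\<lambda>l. y l c"] L by simp
  qed
  have Qw0: "Qw c \<ge> 0" for c unfolding Qw_def using apos by (intro sum_nonneg) (simp add: less_imp_le)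
  have mc: "\<bar>Min (Qw ` {..<N}) - Min (Qy ` {..<N})\<bar> \<le> rho k a \<eta> * Min (Qy ` {..<N})"
    using N by (intro min_comp rho0 cmp Qw0) auto
  have D: "gs_min_diff k a N \<omega> = real N powr (2 / real k) * (Min (Qw ` {..<N}) - Min (Qy ` {..<N}))"
    unfolding gs_min_diff_def Let_def Qw_def Qy_def y_def ..
  have Z: "Zq k a N \<omega> = Min (Qy ` {..<N})" unfolding Zq_def Qy_def y_def ..
  have "\<bar>gs_min_diff k a N \<omega>\<bar> = real N powr (2 / real k) * \<bar>Min (Qw ` {..<N}) - Min (Qy ` {..<N})\<bar>"
    unfolding D abs_mult by simp
  also have "\<dots> \<le> real N powr (2 / real k) * (rho k a \<eta> * Min (Qy ` {..<N}))"
    using mc by (intro mult_left_mono) auto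
  finally show ?thesis unfolding Z by (simp add: algebra_simps)
qed


lemma lt_ne: "k \<ge> 1 \<Longrightarrow> {..<k} \<noteq> ({} :: nat set)"
proof -
  assume "k \<ge> 1"
  then have "0 \<in> {..<k}" by simp
  then show ?thesis by blast
qed

lemma gmd_k0: "gs_min_diff 0 a N \<omega> = 0" unfolding gs_min_diff_def Let_def by simp

lemma Gbad_sets: "Gbad k \<eta> N \<in> sets (gauss_space N)"
proof -
  have [measurable]: "\<And>l m. (\<lambda>\<omega>. ipN N (\<lambda>j. \<omega> (l, j)) (\<lambda>j. \<omega> (m, j))) \<in> borel_measurable (gauss_space N)"
    by (rule ipN_meas)
  show ?thesis unfolding Gbad_def by measurable
qed

lemma Zq_nonneg:
  assumes "N > 0" "\<And>i. i < k \<Longrightarrow> a i > 0"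
  shows "Zq k a N \<omega> \<ge> 0"
  unfolding Zq_def using assms
  by (subst Min_ge_iff) (auto intro!: sum_nonneg simp: less_imp_le)

lemma rho_nonneg:
  assumes k: "k \<ge> 1" and apos: "\<And>i. i < k \<Longrightarrow> a i > 0" and eta: "\<eta> \<ge> 0"
  shows "rho k a \<eta> \<ge> 0"
proof -
  have "(\<Sum>i<k. a i) \<ge> 0" using apos by (intro sum_nonneg) (simp add: less_imp_le)
  moreover have "amin k a > 0" by (rule amin_pos[OF k apos])
  moreover have "CC k * \<eta> \<ge> 0" using CC_pos[of k] eta by simp
  ultimately show ?thesis unfolding rho_def by simp
qed

lemma rho_small:
  assumes k: "k \<ge> 1" and apos: "\<And>i. i < k \<Longrightarrow> a i > 0" and eta: "\<eta> \<ge> 0" "\<eta> \<le> eta0 k"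
    and t: "t > 0"
    and eta2: "\<eta> \<le> t * amin k a / ((\<Sum>i<k. a i) * (2 * real k + (real k)^2) * CC k)"
  shows "rho k a \<eta> \<le> t"
proof -
  define \<epsilon> where "\<epsilon> = CC k * \<eta>"
  define A where "A = (\<Sum>i<k. a i)"
  have C: "CC k > 0" by (rule CC_pos)
  have e0: "\<epsilon> \<ge> 0" unfolding \<epsilon>_def using C eta by simp
  have e1: "\<epsilon> \<le> 1"
  proof -
    have "\<epsilon> \<le> CC k * eta0 k" unfolding \<epsilon>_def using C eta by simp
    also have "\<dots> \<le> 1" by (rule eta0_CC[OF k])
    finally show ?thesis .
  qed
  have A0: "A > 0" unfolding A_def using apos lt_ne[OF k] by (intro sum_pos) auto
  have am: "amin k a > 0" by (rule amin_pos[OF k apos])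
  have K: "2 * real k + (real k)^2 > 0" using k by (simp add: add_pos_nonneg)
  have "\<epsilon> * \<epsilon> \<le> \<epsilon> * 1" using e0 e1 by (intro mult_left_mono) auto
  then have "\<epsilon>^2 \<le> \<epsilon>" by (simp add: power2_eq_square)
  then have "2 * \<epsilon> * real k + \<epsilon>^2 * (real k)^2 \<le> \<epsilon> * (2 * real k + (real k)^2)"
    by (simp add: algebra_simps mult_right_mono)
  then have "rho k a \<eta> \<le> A * (\<epsilon> * (2 * real k + (real k)^2)) / amin k a"
    unfolding rho_def A_def[symmetric] \<epsilon>_def[symmetric] using A0 am
    by (intro divide_right_mono mult_left_mono) auto
  also have "\<epsilon> \<le> CC k * (t * amin k a / (A * (2 * real k + (real k)^2) * CC k))"
    unfolding \<epsilon>_def A_def using eta2 C by (intro mult_left_mono) auto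
  then have "A * (\<epsilon> * (2 * real k + (real k)^2)) / amin k a
      \<le> A * (CC k * (t * amin k a / (A * (2 * real k + (real k)^2) * CC k)) * (2 * real k + (real k)^2)) / amin k a"
    using A0 am K by (intro divide_right_mono mult_left_mono mult_right_mono) auto
  also have "\<dots> = t"
  proof -
    define KK where "KK = 2 * real k + (real k)^2"
    have KK: "KK > 0" unfolding KK_def by (rule K)
    have "A * (CC k * (t * amin k a / (A * KK * CC k)) * KK) / amin k a = t"
      using A0 am KK C by (simp add: field_simps)
    then show ?thesis unfolding KK_def .
  qed
  finally show ?thesis .
qed

theorem lemma3p11:
  fixes k :: nat and a :: "nat \<Rightarrow> real"
  assumes "\<And>i. i < k \<Longrightarrow> a i > 0"
  shows "(\<forall>N. gs_min_diff k a N \<in> borel_measurable (gauss_space N))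
       \<and> (\<forall>\<epsilon>>0. ((\<lambda>N. measure (gauss_space N)
                  {\<omega> \<in> space (gauss_space N). \<bar>gs_min_diff k a N \<omega>\<bar> > \<epsilon>}) \<longlongrightarrow> 0) sequentially)"
proof (intro conjI allI impI)
  fix N show "gs_min_diff k a N \<in> borel_measurable (gauss_space N)" by (rule gmd_meas)
next
  fix e :: real assume e: "e > 0"
  note apos = assms
  show "((\<lambda>N. measure (gauss_space N)
                  {\<omega> \<in> space (gauss_space N). \<bar>gs_min_diff k a N \<omega>\<bar> > e}) \<longlongrightarrow> 0) sequentially"
  proof (cases "k = 0")
    case True
    then show ?thesis using e by (simp add: gmd_k0)
  next
    case False
    then have k: "k \<ge> 1" by simp
    show ?thesis
    proof (rule LIMSEQ_I)
      fix r :: real assume r: "r > 0"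
      define d1 where "d1 = std_normal_density 1"
      have d1: "d1 > 0" unfolding d1_def by (simp add: normal_density_pos)
      define M where "M = max 1 (2 / r)"
      have M1: "M \<ge> 1" and M2: "M \<ge> 2 / r" unfolding M_def by auto
      define \<sigma> where "\<sigma> = M / (2 * d1)"
      have \<sigma>0: "\<sigma> > 0" unfolding \<sigma>_def using M1 d1 by simp
      have d1\<sigma>: "2 * d1 * \<sigma> = M" unfolding \<sigma>_def using d1 by simp
      define A where "A = (\<Sum>i<k. a i)"
      have A0: "A > 0" unfolding A_def using apos lt_ne[OF k] by (intro sum_pos) auto
      define T where "T = A * \<sigma>\<^sup>2"
      have T0: "T > 0" unfolding T_def using A0 \<sigma>0 by simp
      have am: "amin k a > 0" by (rule amin_pos[OF k apos])
      have K: "2 * real k + (real k)^2 > 0" using k by (simp add: add_pos_nonneg)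
      define \<eta> where "\<eta> = min (eta0 k) (e / T * amin k a / (A * (2 * real k + (real k)^2) * CC k))"
      have \<eta>0: "\<eta> > 0" unfolding \<eta>_def using eta0_pos[of k] e T0 am A0 K CC_pos[of k] by simp
      have \<eta>1: "\<eta> \<le> eta0 k" unfolding \<eta>_def by simp
      have rho_le: "rho k a \<eta> \<le> e / T"
        by (rule rho_small[OF k apos less_imp_le[OF \<eta>0] \<eta>1]) (use e T0 in \<open>auto simp: \<eta>_def A_def\<close>)
      have rho0: "rho k a \<eta> \<ge> 0" by (rule rho_nonneg[OF k apos less_imp_le[OF \<eta>0]])
      define B where "B = max (\<sigma> ^ k) (4 * (real k)^2 / (\<eta>^2 * r))"
      define N0 where "N0 = nat \<lceil>B\<rceil> + k + 1"
      show "\<exists>no. \<forall>N\<ge>no. norm (measure (gauss_space N)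
                  {\<omega> \<in> space (gauss_space N). \<bar>gs_min_diff k a N \<omega>\<bar> > e} - 0) < r"
      proof (intro exI allI impI)
        fix N assume N: "N \<ge> N0"
        interpret P: prob_space "gauss_space N" by (rule gauss_prob)
        have N0': "N > 0" "k \<le> N" using N unfolding N0_def by auto
        have NB: "real N > B"
        proof -
          have "B \<le> real (nat \<lceil>B\<rceil>)" by linarith
          also have "\<dots> < real N" using N unfolding N0_def by simp
          finally show ?thesis .
        qed
        have s1: "\<sigma> / real N powr (1 / real k) \<le> 1"
        proof -
          have "\<sigma> ^ k \<le> real N" using NB unfolding B_def by simp
          then have "(\<sigma> ^ k) powr (1 / real k) \<le> real N powr (1 / real k)"
            using \<sigma>0 by (intro powr_mono2) auto
          moreover have "(\<sigma> ^ k) powr (1 / real k) = \<sigma>"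
          proof -
            have "(\<sigma> ^ k) powr (1 / real k) = (\<sigma> powr real k) powr (1 / real k)"
              using \<sigma>0 by (simp add: powr_realpow)
            also have "\<dots> = \<sigma> powr (real k * (1 / real k))" by (simp add: powr_powr)
            also have "real k * (1 / real k) = 1" using k by simp
            finally show ?thesis using \<sigma>0 by simp
          qed
          moreover have "real N powr (1 / real k) > 0" using N0' by simp
          ultimately show ?thesis by simp
        qed
        have sub: "{\<omega> \<in> space (gauss_space N). \<bar>gs_min_diff k a N \<omega>\<bar> > e} \<subseteq> Gbad k \<eta> N \<union> Tset k a T N"
        proof
          fix \<omega> assume \<omega>: "\<omega> \<in> {\<omega> \<in> space (gauss_space N). \<bar>gs_min_diff k a N \<omega>\<bar> > e}"
          show "\<omega> \<in> Gbad k \<eta> N \<union> Tset k a T N"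
          proof (rule ccontr)
            assume no: "\<omega> \<notin> Gbad k \<eta> N \<union> Tset k a T N"
            have G: "\<bar>ipN N (\<lambda>j. \<omega> (l, j)) (\<lambda>j. \<omega> (m, j)) - (if l = m then real N else 0)\<bar> \<le> \<eta> * real N"
              if "l < k" "m < k" for l m
            proof -
              have "\<not> (\<eta> * real N \<le> \<bar>ipN N (\<lambda>j. \<omega> (l, j)) (\<lambda>j. \<omega> (m, j)) - (if l = m then real N else 0)\<bar>)"
                using no \<omega> that unfolding Gbad_def by blast
              then show ?thesis by linarith
            qed
            have L: "\<bar>gs_min_diff k a N \<omega>\<bar> \<le> rho k a \<eta> * (real N powr (2 / real k) * Zq k a N \<omega>)"
              by (rule link[OF k apos N0' less_imp_le[OF \<eta>0] \<eta>1 G])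
            have Tn: "real N powr (2 / real k) * Zq k a N \<omega> \<le> T" using no \<omega> unfolding Tset_def by force
            have "rho k a \<eta> * (real N powr (2 / real k) * Zq k a N \<omega>) \<le> rho k a \<eta> * T"
              using Tn rho0 by (intro mult_left_mono) auto
            also have "\<dots> \<le> e / T * T" using rho_le T0 by (intro mult_right_mono) auto
            also have "\<dots> = e" using T0 by simp
            finally show False using L \<omega> by simp
          qed
        qed
        have "measure (gauss_space N) {\<omega> \<in> space (gauss_space N). \<bar>gs_min_diff k a N \<omega>\<bar> > e}
            \<le> measure (gauss_space N) (Gbad k \<eta> N \<union> Tset k a T N)"
          by (rule P.finite_measure_mono[OF sub]) (intro sets.Un Gbad_sets Tset_sets)
        also have "\<dots> \<le> measure (gauss_space N) (Gbad k \<eta> N) + measure (gauss_space N) (Tset k a T N)"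
          by (rule measure_Un_le) (intro Gbad_sets Tset_sets)+
        also have "measure (gauss_space N) (Gbad k \<eta> N) < r / 2"
        proof -
          have "measure (gauss_space N) (Gbad k \<eta> N) \<le> real k * real k * (2 / (\<eta>^2 * real N))"
            by (rule Gbad_bound[OF N0'(2) N0'(1) \<eta>0])
          also have "\<dots> < r / 2"
          proof -
            have "4 * (real k)^2 / (\<eta>^2 * r) < real N" using NB unfolding B_def by simp
            then have "4 * (real k)^2 < real N * (\<eta>^2 * r)" using \<eta>0 r by (simp add: field_simps)
            then show ?thesis using \<eta>0 r N0' by (simp add: field_simps power2_eq_square)
          qed
          finally show ?thesis .
        qed
        also have "measure (gauss_space N) (Tset k a T N) \<le> r / 2"
        proof -
          have "measure (gauss_space N) (Tset k a T N) \<le> 1 / (2 * std_normal_density 1 * \<sigma>) ^ k"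
            unfolding T_def A_def by (rule tight_bound[OF k apos N0' \<sigma>0 s1])
          also have "\<dots> = 1 / M ^ k" using d1\<sigma> unfolding d1_def by simp
          also have "\<dots> \<le> 1 / M" using M1 k by (intro divide_left_mono) (auto simp: power_increasing[of 1 k M, simplified])
          also have "\<dots> \<le> r / 2" using M2 r M1 by (simp add: field_simps)
          finally show ?thesis .
        qed
        finally show "norm (measure (gauss_space N)
                  {\<omega> \<in> space (gauss_space N). \<bar>gs_min_diff k a N \<omega>\<bar> > e} - 0) < r"
          by simp
      qed
    qed
  qed
qed


end
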